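(* Let $(X,\mathcal{B},\mu)$ be a probability space and $T_1,\dots,T_k$ measurable transformations of $(X,\mathcal{B})$ with $T_i$-invariant probability measures $\mu_i$ equivalent to $\mu$. Let $\nu$ be a probability measure on $(X,\mathcal{B})$ equivalent to $\mu$. If $T_1,\dots,T_k$ are jointly mixing with respect to $(\mu;\mu_1,\dots,\mu_k)$, then they are jointly mixing with respect to $(\nu;\mu_1,\dots,\mu_k)$.
   Context: $T_1,\dots,T_k$ are jointly mixing with respect to $(\mu;\mu_1,\dots,\mu_k)$ if for all $A_0,\dots,A_k\in\mathcal{B}$, $\lim_{n\to\infty}\mu(A_0\cap T_1^{-n}A_1\cap\cdots\cap T_k^{-n}A_k)=\mu(A_0)\prod_{i=1}^k\mu_i(A_i)$. *)

theory Defs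
  imports "HOL-Probability.Probability"
begin

definition equivalent_measures :: "'a measure \<Rightarrow> 'a measure \<Rightarrow> bool" where
  "equivalent_measures M N \<longleftrightarrow> sets M = sets N \<and>
     (\<forall>A\<in>sets M. emeasure M A = 0 \<longleftrightarrow> emeasure N A = 0)"

definition jointly_mixing ::
  "'a measure \<Rightarrow> (nat \<Rightarrow> 'a \<Rightarrow> 'a) \<Rightarrow> (nat \<Rightarrow> 'a measure) \<Rightarrow> nat \<Rightarrow> bool" where
  "jointly_mixing mu T mus k \<longleftrightarrow>
     (\<forall>A :: nat \<Rightarrow> 'a set. (\<forall>i\<in>{0..k}. A i \<in> sets mu) \<longrightarrow>
        (\<lambda>n. measure mu (A 0 \<inter> (\<Inter>i\<in>{1..k}. (T i ^^ n) -` A i \<inter> space mu)))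
          \<longlonglongrightarrow> measure mu (A 0) * (\<Prod>i\<in>{1..k}. measure (mus i) (A i)))"

end

theory Submission imports Defs begin

lemma approx_conv:
  fixes M :: "'a measure" and g :: "nat \<Rightarrow> 'a \<Rightarrow> real" and c :: real and h :: "'a \<Rightarrow> real"
  assumes fin: "finite_measure M"
    and gm: "\<And>n. g n \<in> borel_measurable M"
    and gb: "\<And>n x. x \<in> space M \<Longrightarrow> \<bar>g n x\<bar> \<le> 1"
    and conv: "\<And>B. B \<in> sets M \<Longrightarrow> (\<lambda>n. \<integral>x. indicator B x * g n x \<partial>M) \<longlonglongrightarrow> c * measure M B"
    and h: "integrable M h"
  shows "(\<lambda>n. \<integral>x. h x * g n x \<partial>M) \<longlonglongrightarrow> c * integral\<^sup>L M h"
proof -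
  have im: "integrable M (\<lambda>x. f x * g n x)" if "integrable M f" for f n
  proof (rule Bochner_Integration.integrable_bound[OF that])
    show "(\<lambda>x. f x * g n x) \<in> borel_measurable M" using that gm by measurable
    show "AE x in M. norm (f x * g n x) \<le> norm (f x)"
      using gb by (auto simp: abs_mult intro!: mult_left_le)
  qed
  from h show ?thesis
  proof induct
    case (base A a)
    have "(\<lambda>n. \<integral>x. indicator A x *\<^sub>R a * g n x \<partial>M) = (\<lambda>n. a * \<integral>x. indicator A x * g n x \<partial>M)"
    proof
      fix n
      have "(\<integral>x. indicator A x *\<^sub>R a * g n x \<partial>M) = (\<integral>x. a * (indicator A x * g n x) \<partial>M)"
        by (rule Bochner_Integration.integral_cong) auto
      then show "(\<integral>x. indicator A x *\<^sub>R a * g n x \<partial>M) = a * \<integral>x. indicator A x * g n x \<partial>M"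
        by simp
    qed
    moreover have "(\<lambda>n. a * \<integral>x. indicator A x * g n x \<partial>M) \<longlonglongrightarrow> a * (c * measure M A)"
      by (intro tendsto_mult tendsto_const conv base)
    moreover have "c * (\<integral>x. indicator A x *\<^sub>R a \<partial>M) = a * (c * measure M A)"
      using base sets.sets_into_space[OF base(1)] by (simp add: Int_absorb2)
    ultimately show ?case by (simp only:)
  next
    case (add f1 f2)
    have "(\<lambda>n. \<integral>x. (f1 x + f2 x) * g n x \<partial>M) = (\<lambda>n. (\<integral>x. f1 x * g n x \<partial>M) + (\<integral>x. f2 x * g n x \<partial>M))"
      using im[OF add(1)] im[OF add(3)] by (simp add: distrib_right)
    moreover have "(\<lambda>n. (\<integral>x. f1 x * g n x \<partial>M) + (\<integral>x. f2 x * g n x \<partial>M)) \<longlonglongrightarrow> c * integral\<^sup>L M f1 + c * integral\<^sup>L M f2"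
      by (intro tendsto_add add)
    ultimately show ?case using add by (simp add: distrib_left)
  next
    case (lim f s)
    define b where "b i = (\<integral>x. \<bar>s i x - f x\<bar> \<partial>M)" for i
    have fm: "f \<in> borel_measurable M" using lim by auto
    have sm: "s i \<in> borel_measurable M" for i using lim by auto
    have b0: "b \<longlonglongrightarrow> 0"
    proof -
      have "(\<lambda>i. \<integral>x. \<bar>s i x - f x\<bar> \<partial>M) \<longlonglongrightarrow> integral\<^sup>L M (\<lambda>x. 0::real)"
      proof (rule integral_dominated_convergence[where w="\<lambda>x. 3 * \<bar>f x\<bar>"])
        show "(\<lambda>x. 0::real) \<in> borel_measurable M" by simp
        show "(\<lambda>x. \<bar>s i x - f x\<bar>) \<in> borel_measurable M" for i using sm fm by measurable
        show "integrable M (\<lambda>x. 3 * \<bar>f x\<bar>)" using lim by auto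
        show "AE x in M. (\<lambda>i. \<bar>s i x - f x\<bar>) \<longlonglongrightarrow> 0"
        proof (rule AE_I2)
          fix x assume "x \<in> space M"
          then have "(\<lambda>i. s i x - f x) \<longlonglongrightarrow> 0" using lim(3) by (simp add: LIM_zero)
          then show "(\<lambda>i. \<bar>s i x - f x\<bar>) \<longlonglongrightarrow> 0" using tendsto_rabs by fastforce
        qed
        show "AE x in M. norm \<bar>s i x - f x\<bar> \<le> 3 * \<bar>f x\<bar>" for i
          using lim(4) by (auto intro!: AE_I2) (smt (verit) real_norm_def)
      qed
      then show ?thesis by (simp add: b_def[abs_def])
    qed
    have sfi: "integrable M (\<lambda>x. \<bar>s i x - f x\<bar>)" for i using lim by auto
    have bound: "\<bar>(\<integral>x. f x * g n x \<partial>M) - c * integral\<^sup>L M f\<bar>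
        \<le> (1 + \<bar>c\<bar>) * b i + \<bar>(\<integral>x. s i x * g n x \<partial>M) - c * integral\<^sup>L M (s i)\<bar>" for i n
    proof -
      have e1: "(\<integral>x. f x * g n x \<partial>M) - (\<integral>x. s i x * g n x \<partial>M) = (\<integral>x. (f x - s i x) * g n x \<partial>M)"
        using im[OF lim(5)] im[OF lim(1)] by (simp add: left_diff_distrib)
      have "\<bar>\<integral>x. (f x - s i x) * g n x \<partial>M\<bar> \<le> (\<integral>x. norm ((f x - s i x) * g n x) \<partial>M)"
        using Bochner_Integration.integral_norm_bound[of M "\<lambda>x. (f x - s i x) * g n x"] by simp
      also have "\<dots> \<le> b i" unfolding b_def
      proof (rule Bochner_Integration.integral_mono)
        show "integrable M (\<lambda>x. norm ((f x - s i x) * g n x))"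
          using im[of "\<lambda>x. f x - s i x" n] lim by auto
        show "integrable M (\<lambda>x. \<bar>s i x - f x\<bar>)" by fact
        show "norm ((f x - s i x) * g n x) \<le> \<bar>s i x - f x\<bar>" if "x \<in> space M" for x
          using gb[OF that, of n] by (auto simp: abs_mult abs_minus_commute intro!: mult_left_le)
      qed
      finally have t1: "\<bar>(\<integral>x. f x * g n x \<partial>M) - (\<integral>x. s i x * g n x \<partial>M)\<bar> \<le> b i" using e1 by simp
      have "\<bar>integral\<^sup>L M (s i) - integral\<^sup>L M f\<bar> = \<bar>\<integral>x. s i x - f x \<partial>M\<bar>"
        using lim by simp
      also have "\<dots> \<le> b i" unfolding b_def using Bochner_Integration.integral_norm_bound[of M "\<lambda>x. s i x - f x"] by simp
      finally have t2: "\<bar>c * integral\<^sup>L M (s i) - c * integral\<^sup>L M f\<bar> \<le> \<bar>c\<bar> * b i"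
        by (simp add: abs_mult mult_left_mono flip: right_diff_distrib)
      show ?thesis using t1 t2 by (simp add: distrib_right)
    qed
    show ?case unfolding LIMSEQ_iff
    proof (intro allI impI)
      fix r :: real assume r: "0 < r"
      have "(\<lambda>i. (1 + \<bar>c\<bar>) * b i) \<longlonglongrightarrow> (1 + \<bar>c\<bar>) * 0" by (intro tendsto_mult tendsto_const b0)
      then have "\<exists>no. \<forall>n\<ge>no. norm ((1 + \<bar>c\<bar>) * b n - (1 + \<bar>c\<bar>) * 0) < r/2"
        using LIMSEQ_D[OF _ half_gt_zero[OF r]] by blast
      then obtain i where i: "\<bar>(1 + \<bar>c\<bar>) * b i\<bar> < r/2" by auto
      from lim(2)[of i] have "\<exists>no. \<forall>n\<ge>no. norm ((\<integral>x. s i x * g n x \<partial>M) - c * integral\<^sup>L M (s i)) < r/2"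
        using LIMSEQ_D[OF _ half_gt_zero[OF r]] by blast
      then obtain N where N: "\<And>n. n \<ge> N \<Longrightarrow> \<bar>(\<integral>x. s i x * g n x \<partial>M) - c * integral\<^sup>L M (s i)\<bar> < r/2"
        by auto
      show "\<exists>no. \<forall>n\<ge>no. norm ((\<integral>x. f x * g n x \<partial>M) - c * integral\<^sup>L M f) < r"
      proof (intro exI allI impI)
        fix n assume "N \<le> n"
        from bound[of n i] N[OF this] i
        show "norm ((\<integral>x. f x * g n x \<partial>M) - c * integral\<^sup>L M f) < r" using abs_ge_self[of "(1 + \<bar>c\<bar>) * b i"] by simp
      qed
    qed
  qed
qed


lemma funpow_measurable:
  assumes "T \<in> M \<rightarrow>\<^sub>M M" shows "(T ^^ n) \<in> M \<rightarrow>\<^sub>M M"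
proof (induction n)
  case 0 then show ?case by (simp add: measurable_ident)
next
  case (Suc n) then show ?case using measurable_comp[OF Suc assms] by (simp add: comp_def)
qed

theorem lemma6p2:
  fixes mu nu :: "'a measure" and T :: "nat \<Rightarrow> 'a \<Rightarrow> 'a"
    and mus :: "nat \<Rightarrow> 'a measure" and k :: nat
  assumes "prob_space mu"
    and "\<And>i. i \<in> {1..k} \<Longrightarrow> T i \<in> mu \<rightarrow>\<^sub>M mu"
    and "\<And>i. i \<in> {1..k} \<Longrightarrow> prob_space (mus i)"
    and "\<And>i. i \<in> {1..k} \<Longrightarrow> distr (mus i) (mus i) (T i) = mus i"
    and "\<And>i. i \<in> {1..k} \<Longrightarrow> equivalent_measures (mus i) mu"
    and "prob_space nu"
    and "equivalent_measures nu mu"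
    and "jointly_mixing mu T mus k"
  shows "jointly_mixing nu T mus k"
proof -
  interpret mu: prob_space mu by fact
  interpret nu: prob_space nu by fact
  have sets_eq: "sets nu = sets mu" using assms(7) unfolding equivalent_measures_def by simp
  have space_eq: "space nu = space mu" using sets_eq_imp_space_eq[OF sets_eq] .
  have ac: "absolutely_continuous mu nu"
    using assms(7) unfolding equivalent_measures_def absolutely_continuous_def null_sets_def
    by auto
  obtain D where Dm: "D \<in> borel_measurable mu"
    and DAE: "AE x in mu. RN_deriv mu nu x = ennreal (D x)" and Dnn: "\<And>x. 0 \<le> D x"
    using mu.real_RN_deriv[OF nu.finite_measure_axioms ac sets_eq] by metis
  have nu_eq: "nu = density mu (\<lambda>x. ennreal (D x))"
  proof -
    have "nu = density mu (RN_deriv mu nu)" using mu.density_RN_deriv[OF ac sets_eq] by simp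
    also have "\<dots> = density mu (\<lambda>x. ennreal (D x))"
      by (rule density_cong) (use Dm DAE in auto)
    finally show ?thesis .
  qed
  have Dint: "integrable mu D"
  proof -
    have "integrable (density mu (\<lambda>x. ennreal (D x))) (\<lambda>_. 1::real)"
      using nu.integrable_const nu_eq by metis
    then have "integrable mu (\<lambda>x. D x *\<^sub>R (1::real))"
      using integrable_density[of "\<lambda>_. 1::real" mu D] Dm Dnn by simp
    then show ?thesis by simp
  qed
  have meas_nu: "measure nu B = (\<integral>x. D x * indicator B x \<partial>mu)" if B: "B \<in> sets mu" for B
  proof -
    have "measure nu B = integral\<^sup>L nu (indicator B)"
      using B sets_eq space_eq sets.sets_into_space[OF B] by (simp add: Int_absorb2)
    also have "\<dots> = (\<integral>x. D x *\<^sub>R indicator B x \<partial>mu)"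
      unfolding nu_eq using Dm Dnn B by (intro integral_density) auto
    finally show ?thesis by simp
  qed
  show ?thesis unfolding jointly_mixing_def
  proof (intro allI impI)
    fix A :: "nat \<Rightarrow> 'a set"
    assume A: "\<forall>i\<in>{0..k}. A i \<in> sets nu"
    then have Am: "A i \<in> sets mu" if "i \<in> {0..k}" for i using that sets_eq by auto
    define c where "c = (\<Prod>i\<in>{1..k}. measure (mus i) (A i))"
    define E where "E n = space mu \<inter> (\<Inter>i\<in>{1..k}. (T i ^^ n) -` A i \<inter> space mu)" for n
    have Em: "E n \<in> sets mu" for n
    proof (cases "{1..k} = ({}::nat set)")
      case True then show ?thesis by (simp add: E_def)
    next
      case False
      have "(\<Inter>i\<in>{1..k}. (T i ^^ n) -` A i \<inter> space mu) \<in> sets mu"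
        using False by (intro sets.finite_INT) 
          (auto intro!: measurable_sets[OF funpow_measurable[OF assms(2)]] Am)
      then show ?thesis by (simp add: E_def)
    qed
    have BE: "B \<inter> (\<Inter>i\<in>{1..k}. (T i ^^ n) -` A i \<inter> space mu) = B \<inter> E n"
      if "B \<in> sets mu" for B n
      using sets.sets_into_space[OF that] by (auto simp: E_def)
    have conv: "(\<lambda>n. \<integral>x. indicator B x * indicator (E n) x \<partial>mu) \<longlonglongrightarrow> c * measure mu B"
      if B: "B \<in> sets mu" for B
    proof -
      let ?A = "A(0 := B)"
      have "\<forall>i\<in>{0..k}. ?A i \<in> sets mu" using Am B by auto
      with assms(8) have lim: "(\<lambda>n. measure mu (?A 0 \<inter> (\<Inter>i\<in>{1..k}. (T i ^^ n) -` ?A i \<inter> space mu)))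
          \<longlonglongrightarrow> measure mu (?A 0) * (\<Prod>i\<in>{1..k}. measure (mus i) (?A i))"
        unfolding jointly_mixing_def by blast
      have "(\<Prod>i\<in>{1..k}. measure (mus i) (?A i)) = c" unfolding c_def
        by (intro prod.cong) auto
      moreover have "(\<Inter>i\<in>{1..k}. (T i ^^ n) -` ?A i \<inter> space mu) = (\<Inter>i\<in>{1..k}. (T i ^^ n) -` A i \<inter> space mu)" for n
        by auto
      ultimately have lim2: "(\<lambda>n. measure mu (B \<inter> E n)) \<longlonglongrightarrow> measure mu B * c"
        using lim BE[OF B] by simp
      have "(\<integral>x. indicator B x * indicator (E n) x \<partial>mu) = (measure mu (B \<inter> E n) :: real)" for n
      proof -
        have "(\<integral>x. indicator B x * indicator (E n) x \<partial>mu) = (integral\<^sup>L mu (indicator (B \<inter> E n)) :: real)"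
          by (rule Bochner_Integration.integral_cong) (auto simp: indicator_def)
        also have "\<dots> = measure mu (B \<inter> E n)"
          using sets.sets_into_space[OF B] by (simp add: Int_absorb2 inf.coboundedI1)
        finally show ?thesis .
      qed
      then show ?thesis using lim2 by (simp add: mult.commute)
    qed
    have main: "(\<lambda>n. \<integral>x. (D x * indicator (A 0) x) * indicator (E n) x \<partial>mu)
        \<longlonglongrightarrow> c * (\<integral>x. D x * indicator (A 0) x \<partial>mu)"
    proof (rule approx_conv[where g="\<lambda>n. indicator (E n)"])
      show "finite_measure mu" by (rule mu.finite_measure_axioms)
      show "indicator (E n) \<in> borel_measurable mu" for n using Em by simp
      show "\<bar>indicator (E n) x\<bar> \<le> (1::real)" for n x by (simp split: split_indicator)
      show "integrable mu (\<lambda>x. D x * indicator (A 0) x)"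
        using integrable_mult_indicator[OF Am[of 0] Dint] by (simp add: mult.commute)
    qed (rule conv)
    have "(\<integral>x. (D x * indicator (A 0) x) * indicator (E n) x \<partial>mu) = measure nu (A 0 \<inter> E n)" for n
      using meas_nu[OF sets.Int[OF Am[of 0] Em]] by (simp add: indicator_inter_arith mult.assoc)
    moreover have "(\<integral>x. D x * indicator (A 0) x \<partial>mu) = measure nu (A 0)"
      using meas_nu[OF Am[of 0]] by simp
    moreover have "A 0 \<inter> (\<Inter>i\<in>{1..k}. (T i ^^ n) -` A i \<inter> space nu) = A 0 \<inter> E n" for n
      using BE[OF Am[of 0]] space_eq by simp
    ultimately show "(\<lambda>n. measure nu (A 0 \<inter> (\<Inter>i\<in>{1..k}. (T i ^^ n) -` A i \<inter> space nu)))
          \<longlonglongrightarrow> measure nu (A 0) * (\<Prod>i\<in>{1..k}. measure (mus i) (A i))"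
      using main by (simp add: c_def mult.commute)
  qed
qed

end
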